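(* Let $t>0$, $n\geq 3$, and let $\varphi_1,\dots,\varphi_n>0$ with $\varphi_1+\dots+\varphi_n=t$ (indices cyclic mod $n$). Let $\overline{\mathcal{P}}(\varphi_1,\dots,\varphi_n)\subset\mathbb{R}^n$ be the cone of support vectors and $\mathcal{P}(\varphi_1,\dots,\varphi_n)$ its intersection with the unit sphere of the Euclidean space $(\mathbb{R}^n,\operatorname{coarea})$. Then $\mathcal{P}(\varphi_1,\dots,\varphi_n)$ is a spherical simplex whose facets are contained in the hyperplanes $\{\ell_k=0\}$, $k=1,\dots,n$, where $\ell_k(h)=\frac{h_k\cosh\varphi_{k-1}-h_{k-1}}{\sinh\varphi_{k-1}}+\frac{h_k\cosh\varphi_k-h_{k+1}}{\sinh\varphi_k}$, and it is an acute spherical orthoscheme: the facets $\{\ell_k=0\}$ and $\{\ell_{k+1}=0\}$ meet at an acute interior dihedral angle $\alpha_k$ with $$\cos\alpha_k=\sqrt{\frac{\sinh\varphi_{k-1}\sinh\varphi_{k+1}}{\sinh(\varphi_{k-1}+\varphi_k)\sinh(\varphi_k+\varphi_{k+1})}},$$ and any two facets $\{\ell_k=0\}$, $\{\ell_j=0\}$ with $j\not\equiv k\pm1 \pmod n$ are orthogonal.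
   Context: Lorentz plane: $\mathbb{R}^2$ with $\langle x,y\rangle_1=x_1y_1-x_2y_2$; $\mathbb{H}=\{x:\langle x,x\rangle_1=-1,x_2>0\}$; $H_s=\begin{pmatrix}\cosh s&\sinh s\\ \sinh s&\cosh s\end{pmatrix}$. A $t$-convex polygon is the intersection over $k\in\mathbb{Z}$, $i=1,\dots,n$ of the half-planes $\{x:\langle x,H_t^k\eta_i\rangle_1\le -h_i\}$ for pairwise distinct $\eta_i\in\mathbb{H}$ and $h_i>0$, where each $\eta_i$ is the inward normal of a genuine edge; $(h_1,\dots,h_n)$ is its support vector. The cone of support vectors $\overline{\mathcal{P}}(\varphi_1,\dots,\varphi_n)$ is, for a fixed $\eta\in\mathbb{H}$, the set of support vectors of $t$-convex polygons whose fundamental edges have inward unit normals $\eta_1=\eta$, $\eta_{i+1}=H_{\varphi_i}\eta_i$ ($i=1,\dots,n$; note $\eta_{n+1}=H_t\eta_1$); up to linear isomorphism it does not depend on $\eta$, and $\ell_k(h)$ is the Lorentzian length of the $k$-th fundamental edge. The coarea form is $\operatorname{coarea}(h,k)=\frac12\sum_{i=1}^n\big(h_i\frac{k_i\cosh\varphi_{i-1}-k_{i-1}}{\sinh\varphi_{i-1}}+h_i\frac{k_i\cosh\varphi_i-k_{i+1}}{\sinh\varphi_i}\big)$ (indices mod $n$), a positive definite symmetric bilinear form on $\mathbb{R}^n$. An acute spherical orthoscheme is a spherical simplex each of whose facets makes an acute dihedral angle with exactly two other facets and is orthogonal to all remaining facets. *)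

theory Defs
  imports Complex_Main
begin

text \<open>Conventions: indices are 0-based and cyclic mod n, i.e. paper index i
corresponds to index i-1 here. Vectors of R^n are functions nat => real
vanishing outside {0..<n}.\<close>

definition vecs :: "nat \<Rightarrow> (nat \<Rightarrow> real) set" where
  "vecs n = {h. \<forall>i\<ge>n. h i = 0}"

definition lor :: "real \<times> real \<Rightarrow> real \<times> real \<Rightarrow> real" where
  "lor x y = fst x * fst y - snd x * snd y"

definition hyperbola :: "(real \<times> real) set" where
  "hyperbola = {x. lor x x = -1 \<and> snd x > 0}"

definition Hb :: "real \<Rightarrow> real \<times> real \<Rightarrow> real \<times> real" where
  "Hb s x = (cosh s * fst x + sinh s * snd x, sinh s * fst x + cosh s * snd x)"

text \<open>The polygon: intersection over k in Z and i < n of half-planes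
  <x, H_t^k eta_i> <= -h_i  (H_t^k = H_{k t}).\<close>
definition tpoly :: "real \<Rightarrow> nat \<Rightarrow> (nat \<Rightarrow> real \<times> real) \<Rightarrow> (nat \<Rightarrow> real) \<Rightarrow> (real \<times> real) set" where
  "tpoly t n eta h = {x. \<forall>k::int. \<forall>i<n. lor x (Hb (of_int k * t) (eta i)) \<le> - h i}"

definition genuine_edge :: "real \<Rightarrow> nat \<Rightarrow> (nat \<Rightarrow> real \<times> real) \<Rightarrow> (nat \<Rightarrow> real) \<Rightarrow> nat \<Rightarrow> bool" where
  "genuine_edge t n eta h i \<longleftrightarrow>
     (\<exists>x y. x \<noteq> y \<and> x \<in> tpoly t n eta h \<and> y \<in> tpoly t n eta h \<and>
            lor x (eta i) = - h i \<and> lor y (eta i) = - h i)"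

definition is_support_vector :: "real \<Rightarrow> nat \<Rightarrow> (nat \<Rightarrow> real \<times> real) \<Rightarrow> (nat \<Rightarrow> real) \<Rightarrow> bool" where
  "is_support_vector t n eta h \<longleftrightarrow>
     h \<in> vecs n \<and> (\<forall>i<n. eta i \<in> hyperbola) \<and> inj_on eta {..<n} \<and>
     (\<forall>i<n. h i > 0) \<and> (\<forall>i<n. genuine_edge t n eta h i)"

text \<open>Fundamental normals: eta_0 = eta, eta_{i+1} = H_{phi_i} eta_i.\<close>
definition fund_normals :: "(nat \<Rightarrow> real) \<Rightarrow> real \<times> real \<Rightarrow> nat \<Rightarrow> real \<times> real" where
  "fund_normals phi eta i = Hb (\<Sum>j<i. phi j) eta"

definition supp_cone :: "nat \<Rightarrow> (nat \<Rightarrow> real) \<Rightarrow> real \<times> real \<Rightarrow> (nat \<Rightarrow> real) set" where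
  "supp_cone n phi eta =
     {h. is_support_vector (\<Sum>j<n. phi j) n (fund_normals phi eta) h}"

definition prv :: "nat \<Rightarrow> nat \<Rightarrow> nat" where
  "prv n i = (i + n - 1) mod n"

definition nxt :: "nat \<Rightarrow> nat \<Rightarrow> nat" where
  "nxt n i = (i + 1) mod n"

definition ell :: "nat \<Rightarrow> (nat \<Rightarrow> real) \<Rightarrow> nat \<Rightarrow> (nat \<Rightarrow> real) \<Rightarrow> real" where
  "ell n phi k h =
     (h k * cosh (phi (prv n k)) - h (prv n k)) / sinh (phi (prv n k)) +
     (h k * cosh (phi k) - h (nxt n k)) / sinh (phi k)"

definition coarea :: "nat \<Rightarrow> (nat \<Rightarrow> real) \<Rightarrow> (nat \<Rightarrow> real) \<Rightarrow> (nat \<Rightarrow> real) \<Rightarrow> real" where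
  "coarea n phi h k = (1/2) * (\<Sum>i<n.
      h i * (k i * cosh (phi (prv n i)) - k (prv n i)) / sinh (phi (prv n i)) +
      h i * (k i * cosh (phi i) - k (nxt n i)) / sinh (phi i))"

definition riesz :: "nat \<Rightarrow> ((nat \<Rightarrow> real) \<Rightarrow> (nat \<Rightarrow> real) \<Rightarrow> real) \<Rightarrow> ((nat \<Rightarrow> real) \<Rightarrow> real) \<Rightarrow> nat \<Rightarrow> real" where
  "riesz n B f = (THE u. u \<in> vecs n \<and> (\<forall>h\<in>vecs n. B u h = f h))"

text \<open>Interior dihedral angle, in the Euclidean space (vecs n, B), between the facets
  {f = 0} and {g = 0} of a region lying in {f \<ge> 0, g \<ge> 0}: the supplement of the angle
  between the inward normals.\<close>
definition dihedral :: "nat \<Rightarrow> ((nat \<Rightarrow> real) \<Rightarrow> (nat \<Rightarrow> real) \<Rightarrow> real) \<Rightarrow> ((nat \<Rightarrow> real) \<Rightarrow> real) \<Rightarrow> ((nat \<Rightarrow> real) \<Rightarrow> real) \<Rightarrow> real" where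
  "dihedral n B f g =
     (let u = riesz n B f; v = riesz n B g
      in arccos (- B u v / sqrt (B u u * B v v)))"

end

theory Submission
  imports Defs
begin

locale cyc = fixes n :: nat and phi :: "nat \<Rightarrow> real"
  assumes n3: "n \<ge> 3" and pos: "\<forall>i<n. phi i > 0"
begin

lemma prv_eq: "i < n \<Longrightarrow> prv n i = (if i = 0 then n - 1 else i - 1)"
  using n3 unfolding prv_def
  by (cases i) (auto simp: mod_if)

lemma nxt_eq: "i < n \<Longrightarrow> nxt n i = (if i = n - 1 then 0 else i + 1)"
  using n3 unfolding nxt_def by (auto simp: mod_if)

lemma prv_lt: "i < n \<Longrightarrow> prv n i < n" using n3 by (auto simp: prv_eq)
lemma nxt_lt: "i < n \<Longrightarrow> nxt n i < n" using n3 by (auto simp: nxt_eq)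
lemma prv_nxt: "i < n \<Longrightarrow> prv n (nxt n i) = i"
  using n3 by (auto simp: prv_eq nxt_eq nxt_lt)
lemma nxt_ne: "i < n \<Longrightarrow> nxt n i \<noteq> i" using n3 by (auto simp: nxt_eq)
lemma prv_ne: "i < n \<Longrightarrow> prv n i \<noteq> i" using n3 by (auto simp: prv_eq)
lemma nxt_ne_prv: "i < n \<Longrightarrow> nxt n i \<noteq> prv n i" using n3 by (auto simp: prv_eq nxt_eq)

lemma nxt_bij: "bij_betw (nxt n) {..<n} {..<n}"
proof -
  have "inj_on (nxt n) {..<n}"
    by (metis inj_onI lessThan_iff prv_nxt)
  moreover have "nxt n ` {..<n} \<subseteq> {..<n}" using nxt_lt by auto
  ultimately show ?thesis
    by (simp add: bij_betw_def endo_inj_surj)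
qed

lemma coarea_ell: "coarea n phi h k = 1/2 * (\<Sum>i<n. h i * ell n phi i k)"
  unfolding coarea_def ell_def by (simp add: distrib_left)

definition kap where "kap i = (cosh (phi i) - 1) / sinh (phi i)"

lemma kap_pos: "i < n \<Longrightarrow> kap i > 0"
proof -
  assume "i < n" then have p: "phi i > 0" using pos by auto
  have "cosh (phi i) > 1" using p cosh_real_nonneg_less_iff[of 0 "phi i"] by simp
  moreover have "sinh (phi i) > 0" using p by simp
  ultimately show ?thesis unfolding kap_def by simp
qed

lemma quad_ge: "(\<Sum>i<n. w i * ell n phi i w) \<ge> (\<Sum>i<n. kap i * (w i)^2)"
proof -
  let ?A = "\<lambda>i. w i * (w i * cosh (phi (prv n i)) - w (prv n i)) / sinh (phi (prv n i))"
  let ?B = "\<lambda>i. w i * (w i * cosh (phi i) - w (nxt n i)) / sinh (phi i)"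
  have e1: "(\<Sum>i<n. w i * ell n phi i w) = sum ?A {..<n} + sum ?B {..<n}"
    unfolding ell_def sum.distrib[symmetric] by (simp add: distrib_left)
  have e2: "sum ?A {..<n} = sum (?A \<circ> nxt n) {..<n}"
    using sum.reindex_bij_betw[OF nxt_bij, of ?A] by simp
  have e3: "sum (?A \<circ> nxt n) {..<n} = (\<Sum>i<n. w (nxt n i) * (w (nxt n i) * cosh (phi i) - w i) / sinh (phi i))"
    by (rule sum.cong) (auto simp: prv_nxt)
  have le: "kap i * (w i)^2 \<le> w (nxt n i) * (w (nxt n i) * cosh (phi i) - w i) / sinh (phi i) + ?B i"
    if "i < n" for i
  proof -
    have p: "phi i > 0" using pos that by auto
    have s: "sinh (phi i) > 0" using p by simp
    have c: "cosh (phi i) \<ge> 1" by (rule cosh_real_ge_1)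
    let ?x = "w i" and ?y = "w (nxt n i)" and ?c = "cosh (phi i)"
    have "(?c - 1) * ?x^2 \<le> ?y * (?y * ?c - ?x) + ?x * (?x * ?c - ?y)"
    proof -
      have "0 \<le> (?c - 1) * ?y^2 + (?x - ?y)^2" using c by (simp add: mult_nonneg_nonneg)
      then show ?thesis by (simp add: algebra_simps power2_eq_square)
    qed
    then have "(?c - 1) * ?x^2 / sinh (phi i) \<le> (?y * (?y * ?c - ?x) + ?x * (?x * ?c - ?y)) / sinh (phi i)"
      using s by (simp add: divide_right_mono)
    then show ?thesis unfolding kap_def by (simp add: add_divide_distrib)
  qed
  have "(\<Sum>i<n. kap i * (w i)^2) \<le> (\<Sum>i<n. w (nxt n i) * (w (nxt n i) * cosh (phi i) - w i) / sinh (phi i) + ?B i)"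
    by (rule sum_mono) (use le in auto)
  also have "\<dots> = (\<Sum>i<n. w i * ell n phi i w)"
    unfolding e1 e2 e3 sum.distrib by simp
  finally show ?thesis .
qed

lemma posdef: assumes "w \<in> vecs n" "coarea n phi w w = 0" shows "w = (\<lambda>_. 0)"
proof
  fix j
  have "(\<Sum>i<n. kap i * (w i)^2) \<le> 0" using quad_ge[of w] assms(2) by (simp add: coarea_ell)
  moreover have nn: "\<forall>i\<in>{..<n}. 0 \<le> kap i * (w i)^2" using kap_pos by (simp add: less_imp_le)
  ultimately have "(\<Sum>i<n. kap i * (w i)^2) = 0" by (meson antisym sum_nonneg)
  then have "\<forall>i\<in>{..<n}. kap i * (w i)^2 = 0" using nn sum_nonneg_eq_0_iff[OF finite_lessThan[of n], of "\<lambda>i. kap i * (w i)^2"] by blast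
  then have "\<forall>i<n. w i = 0" using kap_pos by (metis lessThan_iff mult_eq_0_iff less_irrefl power_eq_0_iff)
  then show "w j = 0" using assms(1) unfolding vecs_def by (cases "j < n") auto
qed


definition ee :: "nat \<Rightarrow> nat \<Rightarrow> real" where "ee k = (\<lambda>i. if i = k then 2 else 0)"

lemma coarea_diff: "coarea n phi (\<lambda>i. u i - v i) h = coarea n phi u h - coarea n phi v h"
  by (simp add: coarea_ell left_diff_distrib sum_subtractf right_diff_distrib)

lemma coarea_ee: "k < n \<Longrightarrow> coarea n phi (ee k) h = ell n phi k h"
proof -
  assume k: "k < n"
  have "(\<Sum>i<n. ee k i * ell n phi i h) = (\<Sum>i<n. if i = k then 2 * ell n phi k h else 0)"
    by (rule sum.cong) (auto simp: ee_def)
  also have "\<dots> = 2 * ell n phi k h" using k by simp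
  finally show ?thesis by (simp add: coarea_ell)
qed

lemma ee_vec: "k < n \<Longrightarrow> ee k \<in> vecs n" by (simp add: vecs_def ee_def)

lemma riesz_ell: assumes "k < n" shows "riesz n (coarea n phi) (ell n phi k) = ee k"
  unfolding riesz_def
proof (rule the_equality)
  show "ee k \<in> vecs n \<and> (\<forall>h\<in>vecs n. coarea n phi (ee k) h = ell n phi k h)"
    using assms by (simp add: ee_vec coarea_ee)
next
  fix u assume u: "u \<in> vecs n \<and> (\<forall>h\<in>vecs n. coarea n phi u h = ell n phi k h)"
  let ?w = "\<lambda>i. u i - ee k i"
  have wv: "?w \<in> vecs n" using u assms unfolding vecs_def ee_def by auto
  have c1: "coarea n phi u ?w = ell n phi k ?w" using u wv by blast
  have c2: "coarea n phi (ee k) ?w = ell n phi k ?w" using coarea_ee assms by blast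
  have "coarea n phi ?w ?w = coarea n phi u ?w - coarea n phi (ee k) ?w" by (rule coarea_diff)
  then have "coarea n phi ?w ?w = 0" using c1 c2 by simp
  then have w0: "?w = (\<lambda>_. 0)" using posdef wv by blast
  show "u = ee k"
  proof
    fix i show "u i = ee k i" using fun_cong[OF w0, of i] by simp
  qed
qed

lemma indep: assumes "\<forall>h\<in>vecs n. (\<Sum>k<n. c k * ell n phi k h) = 0" shows "\<forall>k<n. c k = 0"
proof -
  let ?c = "\<lambda>i. if i < n then c i else 0"
  have cv: "?c \<in> vecs n" by (simp add: vecs_def)
  have "(\<Sum>k<n. c k * ell n phi k ?c) = (\<Sum>k<n. ?c k * ell n phi k ?c)" by simp
  then have "coarea n phi ?c ?c = 0" using assms cv by (simp add: coarea_ell)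
  then have "?c = (\<lambda>_. 0)" using posdef cv by blast
  then show ?thesis by (metis (mono_tags, lifting))
qed

lemma orth: assumes "k < n" "j < n" "j \<noteq> k" "j \<noteq> nxt n k" "j \<noteq> prv n k"
  shows "coarea n phi (riesz n (coarea n phi) (ell n phi k)) (riesz n (coarea n phi) (ell n phi j)) = 0"
  using assms by (simp add: riesz_ell coarea_ee) (simp add: ell_def ee_def)

lemma coth_sum: "(a::real) > 0 \<Longrightarrow> b > 0 \<Longrightarrow> cosh a / sinh a + cosh b / sinh b = sinh (a + b) / (sinh a * sinh b)"
proof -
  assume "a > 0" "b > 0"
  then have "sinh a > 0" "sinh b > 0" by auto
  then show ?thesis by (simp add: field_simps sinh_add)
qed

lemma arith1: fixes sa sb sc A C :: real
  assumes "sa > 0" "sb > 0" "sc > 0" "A > 0" "C > 0"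
  shows "4 / (sb^2 * (2 * (A / (sa * sb)) * (2 * (C / (sb * sc))))) = sa * sc / (A * C)"
  using assms by (simp add: field_simps power2_eq_square)

lemma dih: assumes k: "k < n"
  shows "0 < dihedral n (coarea n phi) (ell n phi k) (ell n phi (nxt n k))
              \<and> dihedral n (coarea n phi) (ell n phi k) (ell n phi (nxt n k)) < pi / 2
              \<and> cos (dihedral n (coarea n phi) (ell n phi k) (ell n phi (nxt n k)))
                  = sqrt (sinh (phi (prv n k)) * sinh (phi (nxt n k)) /
                          (sinh (phi (prv n k) + phi k) * sinh (phi k + phi (nxt n k))))"
proof -
  define a where "a = phi (prv n k)"
  define b where "b = phi k"
  define c where "c = phi (nxt n k)"
  have a: "a > 0" using pos prv_lt k a_def by auto
  have b: "b > 0" using pos k b_def by auto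
  have c: "c > 0" using pos nxt_lt k c_def by auto
  have k': "nxt n k < n" using nxt_lt k by auto
  have pk': "prv n (nxt n k) = k" using prv_nxt k by auto
  have uv: "coarea n phi (ee k) (ee (nxt n k)) = - 2 / sinh b"
    using k nxt_ne[OF k] nxt_ne_prv[OF k] by (simp add: coarea_ee nxt_lt) (simp add: ell_def ee_def b_def)
  have uu0: "coarea n phi (ee k) (ee k) = 2 * (cosh a / sinh a + cosh b / sinh b)"
    using k prv_ne[OF k] nxt_ne[OF k]
    by (simp add: coarea_ee) (simp add: ell_def ee_def a_def b_def add_divide_distrib)
  have uu: "coarea n phi (ee k) (ee k) = 2 * (sinh (a + b) / (sinh a * sinh b))"
    using uu0 coth_sum[OF a b] by simp
  have vv0: "coarea n phi (ee (nxt n k)) (ee (nxt n k)) = 2 * (cosh b / sinh b + cosh c / sinh c)"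
    using k' prv_ne[OF k'] nxt_ne[OF k'] pk'
    by (simp add: coarea_ee) (simp add: ell_def ee_def c_def b_def add_divide_distrib)
  have vv: "coarea n phi (ee (nxt n k)) (ee (nxt n k)) = 2 * (sinh (b + c) / (sinh b * sinh c))"
    using vv0 coth_sum[OF b c] by simp
  define r where "r = - coarea n phi (ee k) (ee (nxt n k)) /
       sqrt (coarea n phi (ee k) (ee k) * coarea n phi (ee (nxt n k)) (ee (nxt n k)))"
  have D: "dihedral n (coarea n phi) (ell n phi k) (ell n phi (nxt n k)) = arccos r"
    unfolding dihedral_def r_def Let_def using riesz_ell k k' by simp
  have sab: "sinh (a + b) > 0" and sbc: "sinh (b + c) > 0" using a b c by auto
  have sa: "sinh a > 0" and sb: "sinh b > 0" and sc: "sinh c > 0" using a b c by auto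
  have P: "coarea n phi (ee k) (ee k) * coarea n phi (ee (nxt n k)) (ee (nxt n k)) > 0"
    unfolding uu vv using sab sbc sa sb sc by simp
  have r0: "r > 0" unfolding r_def uv using P sb by simp
  have r2: "r^2 = sinh a * sinh c / (sinh (a + b) * sinh (b + c))"
  proof -
    have "r^2 = 4 / ((sinh b)^2 * (coarea n phi (ee k) (ee k) * coarea n phi (ee (nxt n k)) (ee (nxt n k))))"
      unfolding r_def uv power_divide using P by (simp add: power_divide divide_divide_eq_left)
    also have "\<dots> = sinh a * sinh c / (sinh (a + b) * sinh (b + c))"
      unfolding uu vv using sa sb sc sab sbc by (rule arith1)
    finally show ?thesis .
  qed
  have "sinh a * sinh c < sinh (a + b) * sinh (b + c)"
    using a b c sa sc by (intro mult_strict_mono) auto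
  then have "r^2 < 1" unfolding r2 using sab sbc by simp
  then have r1: "r < 1" using r0 by (smt (verit) power_less_one_iff one_le_power)
  have cr: "cos (arccos r) = r" using r0 r1 by simp
  have sq: "sqrt (sinh a * sinh c / (sinh (a + b) * sinh (b + c))) = r"
    using r2 r0 by (intro real_sqrt_unique) auto
  have g1: "0 < arccos r" using arccos_less_arccos[of r 1] r0 r1 by simp
  have g2: "arccos r < pi / 2" using arccos_less_arccos[of 0 r] r0 r1 by simp
  have G: "0 < arccos r \<and> arccos r < pi / 2 \<and> cos (arccos r) = sqrt (sinh a * sinh c / (sinh (a + b) * sinh (b + c)))"
    unfolding sq using g1 g2 cr by blast
  from G show ?thesis by (simp only: D a_def b_def c_def)
qed

end

context cyc begin

definition S :: "nat \<Rightarrow> real" where "S i = (\<Sum>l<i. phi l)"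
definition ang :: "int \<Rightarrow> real" where
  "ang m = of_int (m div int n) * S n + S (nat (m mod int n))"
definition ph :: "int \<Rightarrow> real" where "ph m = phi (nat (m mod int n))"
definition hh :: "(nat \<Rightarrow> real) \<Rightarrow> int \<Rightarrow> real" where "hh h m = h (nat (m mod int n))"

lemma npos: "int n > 0" using n3 by simp

lemma mod_lt: "nat (m mod int n) < n"
  using npos by (simp add: nat_less_iff)

lemma ph_pos: "ph m > 0" using pos mod_lt unfolding ph_def by blast

lemma S_Suc: "S (Suc i) = S i + phi i" unfolding S_def by simp

lemma ang_succ: "ang (m + 1) = ang m + ph m"
proof -
  define q where "q = m div int n"
  define r where "r = m mod int n"
  have mqr: "q * int n + r = m" unfolding q_def r_def by simp
  have r0: "0 \<le> r" and rn: "r < int n" unfolding r_def using npos by auto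
  have modm: "(m + 1) mod int n = (r + 1) mod int n" unfolding r_def by (simp add: mod_add_left_eq)
  have dm: "((m + 1) div int n) * int n = m + 1 - (m + 1) mod int n"
    by (simp add: minus_mod_eq_div_mult)
  show ?thesis
  proof (cases "r + 1 < int n")
    case True
    have md: "(m + 1) mod int n = r + 1" using modm True r0 by simp
    have "((m + 1) div int n) * int n = q * int n" using dm md mqr by simp
    then have dd: "(m + 1) div int n = q" using npos by simp
    have "nat (r + 1) = Suc (nat r)" using r0 by simp
    then show ?thesis unfolding ang_def ph_def using md dd
      by (simp add: q_def[symmetric] r_def[symmetric] S_Suc)
  next
    case False
    then have rr: "r + 1 = int n" using rn by simp
    have md: "(m + 1) mod int n = 0" using modm rr by simp
    have e1: "((m + 1) div int n) * int n = m + 1" using dm md by simp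
    have e2: "m + 1 = (q + 1) * int n" using mqr rr by (simp add: algebra_simps)
    have "((m + 1) div int n) * int n = (q + 1) * int n" using e1 e2 by simp
    then have dd: "(m + 1) div int n = q + 1" using npos by simp
    have nr: "n = Suc (nat r)" using rr r0 by simp
    have "S n = S (nat r) + phi (nat r)" using nr S_Suc by simp
    then show ?thesis unfolding ang_def ph_def using md dd
      by (simp add: q_def[symmetric] r_def[symmetric] S_def algebra_simps)
  qed
qed

lemma nxt_int: "nxt n (nat (m mod int n)) = nat ((m + 1) mod int n)"
proof -
  have "int (nxt n (nat (m mod int n))) = (m mod int n + 1) mod int n"
    unfolding nxt_def using npos by (simp add: zmod_int add.commute)
  also have "\<dots> = (m + 1) mod int n" by (simp add: mod_add_left_eq)
  finally show ?thesis by simp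
qed

lemma prv_int: "prv n (nat (m mod int n)) = nat ((m - 1) mod int n)"
proof -
  have "int (prv n (nat (m mod int n))) = (m mod int n + (int n - 1)) mod int n"
    unfolding prv_def using npos by (simp add: zmod_int of_nat_diff algebra_simps)
  also have "\<dots> = (m + (int n - 1)) mod int n" by (simp add: mod_add_left_eq)
  also have "\<dots> = (m - 1 + int n) mod int n" by (simp add: algebra_simps)
  also have "\<dots> = (m - 1) mod int n" by simp
  finally show ?thesis by simp
qed

lemma ell_int: "ell n phi (nat (m mod int n)) h =
   (hh h m * cosh (ph (m - 1)) - hh h (m - 1)) / sinh (ph (m - 1)) +
   (hh h m * cosh (ph m) - hh h (m + 1)) / sinh (ph m)"
  unfolding ell_def hh_def ph_def prv_int nxt_int ..

lemma ang_pred: "ang (m - 1) = ang m - ph (m - 1)"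
  using ang_succ[of "m - 1"] by simp

definition NN :: "real \<Rightarrow> real \<times> real" where "NN a = (sinh a, cosh a)"
definition TT :: "real \<Rightarrow> real \<times> real" where "TT a = (cosh a, sinh a)"

lemma lorN_add: "lor x (NN (a + b)) = cosh b * lor x (NN a) + sinh b * lor x (TT a)"
  unfolding lor_def NN_def TT_def by (simp add: sinh_add cosh_add algebra_simps)
lemma lorN_diff: "lor x (NN (a - b)) = cosh b * lor x (NN a) - sinh b * lor x (TT a)"
  unfolding lor_def NN_def TT_def by (simp add: sinh_diff cosh_diff algebra_simps)
lemma lorT_add: "lor x (TT (a + b)) = cosh b * lor x (TT a) + sinh b * lor x (NN a)"
  unfolding lor_def NN_def TT_def by (simp add: sinh_add cosh_add algebra_simps)

lemma lor_inj: assumes "lor x (NN c) = lor y (NN c)" "lor x (TT c) = lor y (TT c)" shows "x = y"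
proof -
  obtain x1 x2 y1 y2 where xy: "x = (x1, x2)" "y = (y1, y2)" by fastforce
  define d1 where "d1 = x1 - y1"
  define d2 where "d2 = x2 - y2"
  have a: "d1 * sinh c - d2 * cosh c = 0" and b: "d1 * cosh c - d2 * sinh c = 0"
    using assms unfolding xy lor_def NN_def TT_def d1_def d2_def by (simp_all add: algebra_simps)
  have hp: "cosh c ^ 2 - sinh c ^ 2 = 1" by (rule hyperbolic_pythagoras)
  have "d1 = d1 * (cosh c ^ 2 - sinh c ^ 2)" using hp by simp
  also have "\<dots> = cosh c * (d1 * cosh c - d2 * sinh c) - sinh c * (d1 * sinh c - d2 * cosh c)"
    by (simp add: algebra_simps power2_eq_square)
  finally have d10: "d1 = 0" using a b by simp
  have "d2 = d2 * (cosh c ^ 2 - sinh c ^ 2)" using hp by simp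
  also have "\<dots> = sinh c * (d1 * cosh c - d2 * sinh c) - cosh c * (d1 * sinh c - d2 * cosh c)"
    by (simp add: algebra_simps power2_eq_square)
  finally have d20: "d2 = 0" using a b by simp
  show ?thesis using d10 d20 unfolding xy d1_def d2_def by simp
qed

lemma sinh_superadd: "(a::real) \<ge> 0 \<Longrightarrow> b \<ge> 0 \<Longrightarrow> sinh a + sinh b \<le> sinh (a + b)"
proof -
  assume a: "a \<ge> 0" and b: "b \<ge> 0"
  have "sinh a * 1 \<le> sinh a * cosh b" using a cosh_real_ge_1 by (intro mult_left_mono) auto
  moreover have "1 * sinh b \<le> cosh a * sinh b" using b cosh_real_ge_1 by (intro mult_right_mono) auto
  ultimately show ?thesis by (simp add: sinh_add)
qed

lemma nonneg_all:
  fixes g ps E :: "int \<Rightarrow> real"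
  assumes psp: "\<And>m. ps m > 0" and Ep: "\<And>m. E m \<ge> 0"
    and rec: "\<And>m. g (m + 1) * sinh (ps (m - 1)) = g m * sinh (ps (m - 1) + ps m) - g (m - 1) * sinh (ps m) + E m * sinh (ps (m - 1)) * sinh (ps m)"
    and g0: "g j = 0" and g1: "g (j + 1) = 0"
  shows "g m \<ge> 0"
proof -
  have key1: "g (m + 1) \<ge> g m" if "g m \<ge> 0" "g (m - 1) \<le> g m" for m
  proof -
    let ?a = "sinh (ps (m - 1))" and ?b = "sinh (ps m)" and ?c = "sinh (ps (m - 1) + ps m)"
    have a: "?a > 0" and b: "?b > 0" using psp by auto
    have sup: "?a + ?b \<le> ?c" using psp by (intro sinh_superadd) (auto simp: less_imp_le)
    have "g (m - 1) * ?b \<le> g m * ?b" using that b by (intro mult_right_mono) auto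
    moreover have "g m * ?a \<le> g m * (?c - ?b)" using that sup by (intro mult_left_mono) auto
    moreover have "E m * ?a * ?b \<ge> 0" using Ep a b by simp
    ultimately have "g m * ?a \<le> g (m + 1) * ?a" using rec[of m] by (simp add: algebra_simps)
    then show ?thesis using a by simp
  qed
  have key2: "g (m - 1) \<ge> g m" if "g m \<ge> 0" "g (m + 1) \<le> g m" for m
  proof -
    let ?a = "sinh (ps (m - 1))" and ?b = "sinh (ps m)" and ?c = "sinh (ps (m - 1) + ps m)"
    have a: "?a > 0" and b: "?b > 0" using psp by auto
    have sup: "?a + ?b \<le> ?c" using psp by (intro sinh_superadd) (auto simp: less_imp_le)
    have "g (m + 1) * ?a \<le> g m * ?a" using that a by (intro mult_right_mono) auto
    moreover have "g m * ?b \<le> g m * (?c - ?a)" using that sup by (intro mult_left_mono) auto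
    moreover have "E m * ?a * ?b \<ge> 0" using Ep a b by simp
    ultimately have "g m * ?b \<le> g (m - 1) * ?b" using rec[of m] by (simp add: algebra_simps)
    then show ?thesis using b by simp
  qed
  have fw: "0 \<le> g (j + 1 + int d) \<and> g (j + int d) \<le> g (j + 1 + int d)" for d :: nat
  proof (induction d)
    case 0 then show ?case using g0 g1 by simp
  next
    case (Suc d)
    have "g (j + 1 + int d) \<le> g (j + 1 + int d + 1)"
      using key1[of "j + 1 + int d"] Suc by simp
    then show ?case using Suc by (simp add: algebra_simps)
  qed
  have bw: "0 \<le> g (j - int d) \<and> g (j - int d + 1) \<le> g (j - int d)" for d :: nat
  proof (induction d)
    case 0 then show ?case using g0 g1 by simp
  next
    case (Suc d)
    have "g (j - int d) \<le> g (j - int d - 1)"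
      using key2[of "j - int d"] Suc by simp
    then show ?case using Suc by (simp add: algebra_simps)
  qed
  show ?thesis
  proof (cases "m \<ge> j + 1")
    case True
    then have "m = j + 1 + int (nat (m - j - 1))" by simp
    then show ?thesis using fw[of "nat (m - j - 1)"] by metis
  next
    case False
    then have "m = j - int (nat (j - m))" by simp
    then show ?thesis using bw[of "nat (j - m)"] by metis
  qed
qed

lemma g_rec:
  "(- lor x (NN (th + ang (m + 1))) - hh h (m + 1)) * sinh (ph (m - 1)) =
     (- lor x (NN (th + ang m)) - hh h m) * sinh (ph (m - 1) + ph m)
     - (- lor x (NN (th + ang (m - 1))) - hh h (m - 1)) * sinh (ph m)
     + ell n phi (nat (m mod int n)) h * sinh (ph (m - 1)) * sinh (ph m)"
proof -
  define c where "c = th + ang m"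
  define u where "u = ph (m - 1)"
  define v where "v = ph m"
  have u: "sinh u > 0" and v: "sinh v > 0" unfolding u_def v_def using ph_pos by auto
  have e1: "th + ang (m + 1) = c + v" unfolding c_def v_def ang_succ by simp
  have e2: "th + ang (m - 1) = c - u" unfolding c_def u_def ang_pred by simp
  define P where "P = lor x (NN c)"
  define Q where "Q = lor x (TT c)"
  define h0 where "h0 = hh h m"
  define hm where "hm = hh h (m - 1)"
  define hp where "hp = hh h (m + 1)"
  have E: "ell n phi (nat (m mod int n)) h * sinh u * sinh v = (h0 * cosh u - hm) * sinh v + (h0 * cosh v - hp) * sinh u"
    unfolding ell_int h0_def[symmetric] hm_def[symmetric] hp_def[symmetric] u_def[symmetric] v_def[symmetric]
    using u v by (simp add: field_simps)
  show ?thesis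
    unfolding e1 e2 lorN_add lorN_diff c_def[symmetric] u_def[symmetric] v_def[symmetric]
      P_def[symmetric] Q_def[symmetric] h0_def[symmetric] hm_def[symmetric] hp_def[symmetric] E
    by (simp add: sinh_add algebra_simps)
qed

definition bpl :: "(nat \<Rightarrow> real) \<Rightarrow> int \<Rightarrow> real" where
  "bpl h j = (hh h j * cosh (ph j) - hh h (j + 1)) / sinh (ph j)"

definition vert :: "real \<Rightarrow> (nat \<Rightarrow> real) \<Rightarrow> int \<Rightarrow> real \<times> real" where
  "vert th h j = (hh h j * sinh (th + ang j) + bpl h j * cosh (th + ang j),
                  hh h j * cosh (th + ang j) + bpl h j * sinh (th + ang j))"

lemma hp1: "cosh (a::real) * cosh a - sinh a * sinh a = 1"
  using hyperbolic_pythagoras[of a] by (simp add: power2_eq_square)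

lemma vN: "lor (vert th h j) (NN (th + ang j)) = - hh h j"
proof -
  have "lor (vert th h j) (NN (th + ang j)) = - hh h j * (cosh (th + ang j) * cosh (th + ang j) - sinh (th + ang j) * sinh (th + ang j))"
    unfolding vert_def lor_def NN_def by (simp add: algebra_simps)
  then show ?thesis using hp1 by simp
qed

lemma vT: "lor (vert th h j) (TT (th + ang j)) = bpl h j"
proof -
  have "lor (vert th h j) (TT (th + ang j)) = bpl h j * (cosh (th + ang j) * cosh (th + ang j) - sinh (th + ang j) * sinh (th + ang j))"
    unfolding vert_def lor_def TT_def by (simp add: algebra_simps)
  then show ?thesis using hp1 by simp
qed

lemma vN1: "lor (vert th h j) (NN (th + ang (j + 1))) = - hh h (j + 1)"
proof -
  have s: "sinh (ph j) > 0" using ph_pos by simp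
  have e: "th + ang (j + 1) = (th + ang j) + ph j" by (simp add: ang_succ)
  have "lor (vert th h j) (NN (th + ang (j + 1))) = lor (vert th h j) (NN ((th + ang j) + ph j))"
    by (simp only: e)
  also have "\<dots> = cosh (ph j) * (- hh h j) + sinh (ph j) * bpl h j"
    by (simp only: lorN_add[of "vert th h j" "th + ang j" "ph j"] vN vT)
  also have "\<dots> = - hh h (j + 1)" unfolding bpl_def using s by (simp add: field_simps)
  finally show ?thesis .
qed

lemma vT1: "lor (vert th h j) (TT (th + ang (j + 1))) = (hh h j - hh h (j + 1) * cosh (ph j)) / sinh (ph j)"
proof -
  have s: "sinh (ph j) > 0" using ph_pos by simp
  have e: "th + ang (j + 1) = (th + ang j) + ph j" by (simp add: ang_succ)
  have "lor (vert th h j) (TT (th + ang (j + 1))) = lor (vert th h j) (TT ((th + ang j) + ph j))"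
    by (simp only: e)
  also have "\<dots> = cosh (ph j) * bpl h j + sinh (ph j) * (- hh h j)"
    by (simp only: lorT_add[of "vert th h j" "th + ang j" "ph j"] vN vT)
  also have "\<dots> = (hh h j * (cosh (ph j) * cosh (ph j) - sinh (ph j) * sinh (ph j)) - hh h (j + 1) * cosh (ph j)) / sinh (ph j)"
    unfolding bpl_def using s by (simp add: field_simps)
  also have "\<dots> = (hh h j - hh h (j + 1) * cosh (ph j)) / sinh (ph j)" using hp1 by simp
  finally show ?thesis .
qed

lemma vert_in: assumes "\<forall>k<n. ell n phi k h \<ge> 0"
  shows "lor (vert th h j) (NN (th + ang m)) \<le> - hh h m"
proof -
  let ?g = "\<lambda>m. - lor (vert th h j) (NN (th + ang m)) - hh h m"
  have "?g m \<ge> 0"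
  proof (rule nonneg_all[where ps = ph and E = "\<lambda>m. ell n phi (nat (m mod int n)) h" and j = j])
    show "\<And>m. ph m > 0" by (rule ph_pos)
    show "\<And>m. ell n phi (nat (m mod int n)) h \<ge> 0" using assms mod_lt by blast
    show "\<And>m. ?g (m + 1) * sinh (ph (m - 1)) = ?g m * sinh (ph (m - 1) + ph m) - ?g (m - 1) * sinh (ph m) + ell n phi (nat (m mod int n)) h * sinh (ph (m - 1)) * sinh (ph m)"
      by (rule g_rec)
    show "?g j = 0" using vN by simp
    show "?g (j + 1) = 0" using vN1 by simp
  qed
  then show ?thesis by simp
qed

lemma Hb_NN: "Hb s (NN a) = NN (a + s)"
  unfolding Hb_def NN_def by (simp add: sinh_add cosh_add algebra_simps)

lemma fund_NN: "fund_normals phi (NN th) i = NN (th + S i)"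
  unfolding fund_normals_def S_def by (simp add: Hb_NN add.commute)

lemma ang_nat: "i < n \<Longrightarrow> ang (int i) = S i"
  unfolding ang_def by simp

lemma hh_nat: "i < n \<Longrightarrow> hh h (int i) = h i"
  unfolding hh_def by simp

lemma tpoly_iff: "x \<in> tpoly (S n) n (fund_normals phi (NN th)) h \<longleftrightarrow> (\<forall>m. lor x (NN (th + ang m)) \<le> - hh h m)"
proof
  assume x: "x \<in> tpoly (S n) n (fund_normals phi (NN th)) h"
  show "\<forall>m. lor x (NN (th + ang m)) \<le> - hh h m"
  proof
    fix m
    have "lor x (Hb (of_int (m div int n) * S n) (fund_normals phi (NN th) (nat (m mod int n)))) \<le> - h (nat (m mod int n))"
      using x mod_lt unfolding tpoly_def by blast
    then show "lor x (NN (th + ang m)) \<le> - hh h m"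
      unfolding fund_NN Hb_NN ang_def hh_def by (simp add: algebra_simps)
  qed
next
  assume a: "\<forall>m. lor x (NN (th + ang m)) \<le> - hh h m"
  show "x \<in> tpoly (S n) n (fund_normals phi (NN th)) h"
    unfolding tpoly_def
  proof (intro CollectI allI impI)
    fix k :: int and i assume i: "i < n"
    let ?m = "k * int n + int i"
    have d: "?m div int n = k" using i npos by simp
    have md: "?m mod int n = int i" using i npos by simp
    have "lor x (NN (th + ang ?m)) \<le> - hh h ?m" using a by blast
    then show "lor x (Hb (of_int k * S n) (fund_normals phi (NN th) i)) \<le> - h i"
      unfolding fund_NN Hb_NN ang_def hh_def d md by (simp add: algebra_simps)
  qed
qed

lemma div_le1: "(s::real) > 0 \<Longrightarrow> - h * c + s * q \<le> - h' \<Longrightarrow> q \<le> (h * c - h') / s"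
  by (simp add: pos_le_divide_eq algebra_simps)
lemma div_le2: "(s::real) > 0 \<Longrightarrow> - h * c - s * q \<le> - h' \<Longrightarrow> (h' - h * c) / s \<le> q"
  by (simp add: pos_divide_le_eq algebra_simps)

lemma gen_imp: assumes i: "i < n" and g: "genuine_edge (S n) n (fund_normals phi (NN th)) h i"
  shows "ell n phi i h > 0"
proof -
  define c where "c = th + ang (int i)"
  define u where "u = ph (int i - 1)"
  define v where "v = ph (int i)"
  have su: "sinh u > 0" and sv: "sinh v > 0" unfolding u_def v_def using ph_pos by auto
  have ep: "th + ang (int i + 1) = c + v" unfolding c_def v_def ang_succ by simp
  have em: "th + ang (int i - 1) = c - u" unfolding c_def u_def ang_pred by simp
  have line: "NN (th + S i) = NN c" unfolding c_def using ang_nat i by simp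
  have bounds: "(hh h (int i - 1) - h i * cosh u) / sinh u \<le> lor z (TT c) \<and> lor z (TT c) \<le> (h i * cosh v - hh h (int i + 1)) / sinh v"
    if z: "z \<in> tpoly (S n) n (fund_normals phi (NN th)) h" "lor z (fund_normals phi (NN th) i) = - h i" for z
  proof -
    have zc: "lor z (NN c) = - h i" using z(2) unfolding fund_NN line .
    have all: "\<forall>m. lor z (NN (th + ang m)) \<le> - hh h m" using z(1) tpoly_iff by blast
    have "lor z (NN (c + v)) \<le> - hh h (int i + 1)" using all ep by metis
    then have "- h i * cosh v + sinh v * lor z (TT c) \<le> - hh h (int i + 1)"
      unfolding lorN_add zc by (simp add: algebra_simps)
    then have up: "lor z (TT c) \<le> (h i * cosh v - hh h (int i + 1)) / sinh v" using sv by (rule div_le1[rotated])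
    have "lor z (NN (c - u)) \<le> - hh h (int i - 1)" using all em by metis
    then have "- h i * cosh u - sinh u * lor z (TT c) \<le> - hh h (int i - 1)"
      unfolding lorN_diff zc by (simp add: algebra_simps)
    then have lo: "(hh h (int i - 1) - h i * cosh u) / sinh u \<le> lor z (TT c)" using su by (rule div_le2[rotated])
    show ?thesis using up lo by simp
  qed
  obtain x y where xy: "x \<noteq> y" "x \<in> tpoly (S n) n (fund_normals phi (NN th)) h" "y \<in> tpoly (S n) n (fund_normals phi (NN th)) h"
     "lor x (fund_normals phi (NN th) i) = - h i" "lor y (fund_normals phi (NN th) i) = - h i"
    using g unfolding genuine_edge_def by blast
  have "lor x (NN c) = lor y (NN c)" using xy(4,5) unfolding fund_NN line by simp
  then have neq: "lor x (TT c) \<noteq> lor y (TT c)" using xy(1) lor_inj by blast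
  have bx: "(hh h (int i - 1) - h i * cosh u) / sinh u \<le> lor x (TT c) \<and> lor x (TT c) \<le> (h i * cosh v - hh h (int i + 1)) / sinh v"
    using bounds xy by blast
  have by': "(hh h (int i - 1) - h i * cosh u) / sinh u \<le> lor y (TT c) \<and> lor y (TT c) \<le> (h i * cosh v - hh h (int i + 1)) / sinh v"
    using bounds xy by blast
  have lt: "(hh h (int i - 1) - h i * cosh u) / sinh u < (h i * cosh v - hh h (int i + 1)) / sinh v"
    using bx by' neq by linarith
  have "ell n phi i h = (h i * cosh u - hh h (int i - 1)) / sinh u + (h i * cosh v - hh h (int i + 1)) / sinh v"
    using ell_int[of "int i" h] i unfolding u_def v_def by (simp add: hh_nat)
  also have "\<dots> = (h i * cosh v - hh h (int i + 1)) / sinh v - (hh h (int i - 1) - h i * cosh u) / sinh u"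
    by (simp add: diff_divide_distrib)
  finally show ?thesis using lt by simp
qed

lemma gen_from: assumes i: "i < n" and e: "\<forall>k<n. ell n phi k h > 0"
  shows "genuine_edge (S n) n (fund_normals phi (NN th)) h i"
proof -
  have e0: "\<forall>k<n. ell n phi k h \<ge> 0" using e by (simp add: less_imp_le)
  define x where "x = vert th h (int i)"
  define y where "y = vert th h (int i - 1)"
  define c where "c = th + ang (int i)"
  have line: "fund_normals phi (NN th) i = NN c" unfolding fund_NN c_def using ang_nat i by simp
  have xin: "x \<in> tpoly (S n) n (fund_normals phi (NN th)) h"
    unfolding tpoly_iff x_def using vert_in[OF e0] by blast
  have yin: "y \<in> tpoly (S n) n (fund_normals phi (NN th)) h"
    unfolding tpoly_iff y_def using vert_in[OF e0] by blast
  have xl: "lor x (fund_normals phi (NN th) i) = - h i"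
    unfolding line x_def c_def vN using hh_nat i by simp
  have yl: "lor y (fund_normals phi (NN th) i) = - h i"
    unfolding line y_def c_def using vN1[of th h "int i - 1"] hh_nat i by simp
  have xT: "lor x (TT c) = bpl h (int i)" unfolding x_def c_def vT ..
  have yT: "lor y (TT c) = (hh h (int i - 1) - hh h (int i) * cosh (ph (int i - 1))) / sinh (ph (int i - 1))"
    unfolding y_def c_def using vT1[of th h "int i - 1"] by simp
  have "ell n phi i h = lor x (TT c) - lor y (TT c)"
    unfolding xT yT bpl_def using ell_int[of "int i" h] i by (simp add: diff_divide_distrib)
  then have "x \<noteq> y" using e i by auto
  then show ?thesis unfolding genuine_edge_def using xin yin xl yl by blast
qed

lemma h_pos: assumes e: "\<forall>k<n. ell n phi k h > 0" shows "\<forall>k<n. h k > 0"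
proof -
  have fin: "finite (h ` {..<n})" by simp
  have "0 \<in> {..<n}" using n3 by simp
  then have ne: "h ` {..<n} \<noteq> {}" by blast
  obtain i0 where i0: "i0 < n" "h i0 = Min (h ` {..<n})" using Min_in[OF fin ne] by auto
  have mn: "h i0 \<le> h k" if "k < n" for k using i0 Min_le[OF fin] that by simp
  define a where "a = phi (prv n i0)"
  define b where "b = phi i0"
  have a: "a > 0" unfolding a_def using pos prv_lt i0 by auto
  have b: "b > 0" unfolding b_def using pos i0 by auto
  have sa: "sinh a > 0" and sb: "sinh b > 0" using a b by auto
  have ca: "cosh a > 1" using a cosh_real_nonneg_less_iff[of 0 a] by simp
  have cb: "cosh b > 1" using b cosh_real_nonneg_less_iff[of 0 b] by simp
  have "(h i0 * cosh a - h (prv n i0)) / sinh a \<le> (h i0 * cosh a - h i0) / sinh a"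
    using mn[OF prv_lt[OF i0(1)]] sa by (intro divide_right_mono) auto
  moreover have "(h i0 * cosh b - h (nxt n i0)) / sinh b \<le> (h i0 * cosh b - h i0) / sinh b"
    using mn[OF nxt_lt[OF i0(1)]] sb by (intro divide_right_mono) auto
  ultimately have "ell n phi i0 h \<le> h i0 * ((cosh a - 1) / sinh a + (cosh b - 1) / sinh b)"
    unfolding ell_def a_def[symmetric] b_def[symmetric] by (simp add: algebra_simps diff_divide_distrib)
  moreover have "(cosh a - 1) / sinh a + (cosh b - 1) / sinh b > 0"
  proof -
    have "(cosh a - 1) / sinh a > 0" using ca sa by simp
    moreover have "(cosh b - 1) / sinh b > 0" using cb sb by simp
    ultimately show ?thesis by simp
  qed
  ultimately have "h i0 > 0" using e i0(1)
    by (smt (verit) mult_nonpos_nonneg)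
  then show ?thesis using mn by (meson less_le_trans)
qed

lemma hyp_NN: "NN a \<in> hyperbola"
  unfolding hyperbola_def lor_def NN_def using hp1[of a] by simp

lemma S_mono: "i < j \<Longrightarrow> j \<le> n \<Longrightarrow> S i < S j"
proof (induction j)
  case 0 then show ?case by simp
next
  case (Suc j)
  have p: "phi j > 0" using pos Suc.prems by auto
  show ?case
  proof (cases "i = j")
    case True then show ?thesis using p S_Suc by simp
  next
    case False
    then have "S i < S j" using Suc by simp
    then show ?thesis using p S_Suc by simp
  qed
qed

lemma fund_inj: "inj_on (fund_normals phi (NN th)) {..<n}"
proof (rule inj_onI)
  fix i j assume i: "i \<in> {..<n}" and j: "j \<in> {..<n}" and e: "fund_normals phi (NN th) i = fund_normals phi (NN th) j"
  from e have "NN (th + S i) = NN (th + S j)" unfolding fund_NN by simp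
  then have "sinh (th + S i) = sinh (th + S j)" unfolding NN_def by simp
  then have "S i = S j" by simp
  then show "i = j" using S_mono i j by (metis lessThan_iff linorder_neqE_nat less_imp_le less_irrefl)
qed

lemma hyp_param: assumes "eta \<in> hyperbola" shows "\<exists>th. eta = NN th"
proof -
  obtain e1 e2 where ee: "eta = (e1, e2)" by fastforce
  have h: "e1 * e1 - e2 * e2 = -1" "e2 > 0" using assms unfolding ee hyperbola_def lor_def by auto
  have "e2 = sqrt (e1^2 + 1)"
    using h by (intro real_sqrt_unique[symmetric]) (auto simp: power2_eq_square algebra_simps)
  then have "eta = NN (arsinh e1)" unfolding ee NN_def by (simp add: cosh_arsinh_real)
  then show ?thesis by blast
qed

lemma supp_iff: assumes "eta \<in> hyperbola"
  shows "h \<in> supp_cone n phi eta \<longleftrightarrow> h \<in> vecs n \<and> (\<forall>k<n. ell n phi k h > 0)"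
proof -
  obtain th where th: "eta = NN th" using hyp_param assms by blast
  have sn: "(\<Sum>j<n. phi j) = S n" unfolding S_def ..
  show ?thesis
    unfolding supp_cone_def sn th is_support_vector_def mem_Collect_eq
    using gen_imp gen_from h_pos fund_inj hyp_NN fund_NN by metis
qed

end

theorem mainTheorem5:
  fixes n :: nat and phi :: "nat \<Rightarrow> real" and t :: real and eta :: "real \<times> real"
  assumes "n \<ge> 3"
    and "t > 0"
    and "\<forall>i<n. phi i > 0"
    and "(\<Sum>i<n. phi i) = t"
    and "eta \<in> hyperbola"
  shows
    "supp_cone n phi eta \<inter> {h. coarea n phi h h = 1}
       = {h \<in> vecs n. coarea n phi h h = 1 \<and> (\<forall>k<n. ell n phi k h > 0)}
     \<and> (\<forall>c. (\<forall>h\<in>vecs n. (\<Sum>k<n. c k * ell n phi k h) = 0) \<longrightarrow> (\<forall>k<n. c k = 0))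
     \<and> (\<forall>k<n. 0 < dihedral n (coarea n phi) (ell n phi k) (ell n phi (nxt n k))
              \<and> dihedral n (coarea n phi) (ell n phi k) (ell n phi (nxt n k)) < pi / 2
              \<and> cos (dihedral n (coarea n phi) (ell n phi k) (ell n phi (nxt n k)))
                  = sqrt (sinh (phi (prv n k)) * sinh (phi (nxt n k)) /
                          (sinh (phi (prv n k) + phi k) * sinh (phi k + phi (nxt n k)))))
     \<and> (\<forall>k<n. \<forall>j<n. j \<noteq> k \<and> j \<noteq> nxt n k \<and> j \<noteq> prv n k \<longrightarrow>
           coarea n phi (riesz n (coarea n phi) (ell n phi k))
                        (riesz n (coarea n phi) (ell n phi j)) = 0)"
proof -
  interpret cyc n phi using assms(1,3) by unfold_locales
  have A: "supp_cone n phi eta \<inter> {h. coarea n phi h h = 1}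
       = {h \<in> vecs n. coarea n phi h h = 1 \<and> (\<forall>k<n. ell n phi k h > 0)}"
    using supp_iff[OF assms(5)] by blast
  show ?thesis using A indep dih orth by blast
qed

end
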